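(* Let $L>0,\alpha>0$. For any $b\in\Lambda(\alpha)$ and $\lambda>0$, $-\alpha\ge\mu(\lambda,b)\ge-\alpha-\alpha^2L^2$.
   Context: $\Lambda(\alpha)$: $b\in C^1(\mathbb R)$, $b\ge0$, $L$-periodic, $\int_0^Lb=\alpha L$. $\mu(\lambda,b)$ denotes the principal eigenvalue of $-\psi''+2\lambda\psi'-b\psi=\mu\psi$, i.e. the eigenvalue admitting a positive $L$-periodic eigenfunction $\psi$. *)

theory Defs
  imports "HOL-Analysis.Analysis"
begin

definition C1_fun :: "(real \<Rightarrow> real) \<Rightarrow> bool" where
  "C1_fun f \<longleftrightarrow> (\<exists>f'. (\<forall>x. (f has_real_derivative f' x) (at x)) \<and> continuous_on UNIV f')"

definition C2_with :: "(real \<Rightarrow> real) \<Rightarrow> (real \<Rightarrow> real) \<Rightarrow> (real \<Rightarrow> real) \<Rightarrow> bool" where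
  "C2_with f f' f'' \<longleftrightarrow> (\<forall>x. (f has_real_derivative f' x) (at x)) \<and>
      (\<forall>x. (f' has_real_derivative f'' x) (at x)) \<and> continuous_on UNIV f''"

definition periodic_fun :: "real \<Rightarrow> (real \<Rightarrow> real) \<Rightarrow> bool" where
  "periodic_fun L f \<longleftrightarrow> (\<forall>x. f (x + L) = f x)"

definition Lambda :: "real \<Rightarrow> real \<Rightarrow> (real \<Rightarrow> real) set" where
  "Lambda L \<alpha> = {b. C1_fun b \<and> (\<forall>x. b x \<ge> 0) \<and> periodic_fun L b \<and>
      integral {0..L} b = \<alpha> * L}"

definition is_principal_eigenvalue :: "real \<Rightarrow> real \<Rightarrow> (real \<Rightarrow> real) \<Rightarrow> real \<Rightarrow> bool" where
  "is_principal_eigenvalue L lam b \<mu> \<longleftrightarrow>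
     (\<exists>\<psi> \<psi>' \<psi>''. C2_with \<psi> \<psi>' \<psi>'' \<and> (\<forall>x. \<psi> x > 0) \<and> periodic_fun L \<psi> \<and>
        (\<forall>x. - \<psi>'' x + 2 * lam * \<psi>' x - b x * \<psi> x = \<mu> * \<psi> x))"

end

theory Submission
  imports Defs
begin

lemma periodic_nat:
  assumes "periodic_fun L f"
  shows "f (x + real n * L) = f x \<and> f (x - real n * L) = f x"
proof (induction n arbitrary: x)
  case 0 then show ?case by simp
next
  case (Suc n)
  have p: "\<And>u. f (u + L) = f u" using assms unfolding periodic_fun_def by blast
  have a: "x + real (Suc n) * L = (x + real n * L) + L" by (simp add: algebra_simps)
  have b: "x - real n * L = (x - real (Suc n) * L) + L" by (simp add: algebra_simps)
  have "f (x + real (Suc n) * L) = f ((x + real n * L) + L)" by (simp only: a)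
  also have "\<dots> = f (x + real n * L)" by (rule p)
  also have "\<dots> = f x" using Suc by blast
  finally have 1: "f (x + real (Suc n) * L) = f x" .
  have "f (x - real (Suc n) * L) = f ((x - real (Suc n) * L) + L)" by (rule p[symmetric])
  also have "\<dots> = f (x - real n * L)" by (simp only: b)
  also have "\<dots> = f x" using Suc by blast
  finally show ?case using 1 by blast
qed

lemma periodic_int:
  assumes "periodic_fun L f"
  shows "f (x + real_of_int k * L) = f x"
proof (cases "k \<ge> 0")
  case True
  define n where "n = nat k"
  have "k = int n" using True unfolding n_def by simp
  then show ?thesis using periodic_nat[OF assms, of x n] by simp
next
  case False
  define n where "n = nat (-k)"
  have "k = - int n" using False unfolding n_def by simp
  then show ?thesis using periodic_nat[OF assms, of x n] by simp
qed

lemma periodic_reduce: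
  assumes "periodic_fun L f" "L > 0"
  shows "\<exists>y\<in>{0..L}. f x = f y"
proof -
  define k where "k = \<lfloor>x / L\<rfloor>"
  have "real_of_int k \<le> x / L" "x / L < real_of_int k + 1" unfolding k_def by linarith+
  then have h: "real_of_int k * L \<le> x" "x < (real_of_int k + 1) * L"
    using assms(2) by (simp_all add: field_simps)
  have e: "f (x + real_of_int (-k) * L) = f x" by (rule periodic_int[OF assms(1)])
  have m: "x + real_of_int (-k) * L \<in> {0..L}" using h by (auto simp: algebra_simps)
  show ?thesis
  proof (rule bexI[OF _ m])
    show "f x = f (x + real_of_int (-k) * L)" using e by simp
  qed
qed

lemma periodic_max:
  assumes "periodic_fun L f" "L > 0" "continuous_on UNIV f"
  shows "\<exists>x. \<forall>y. f y \<le> f x"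
proof -
  have "continuous_on {0..L} f" using assms(3) continuous_on_subset by blast
  then obtain x where x: "x \<in> {0..L}" "\<forall>y\<in>{0..L}. f y \<le> f x"
    using continuous_attains_sup[of "{0..L}" f] assms(2) by auto
  show ?thesis
  proof (intro exI allI)
    fix y
    obtain z where "z \<in> {0..L}" "f y = f z" using periodic_reduce[OF assms(1,2)] by blast
    then show "f y \<le> f x" using x by simp
  qed
qed

lemma periodic_min:
  assumes "periodic_fun L f" "L > 0" "continuous_on UNIV f"
  shows "\<exists>x. \<forall>y. f x \<le> f y"
proof -
  have "continuous_on {0..L} f" using assms(3) continuous_on_subset by blast
  then obtain x where x: "x \<in> {0..L}" "\<forall>y\<in>{0..L}. f x \<le> f y"
    using continuous_attains_inf[of "{0..L}" f] assms(2) by auto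
  show ?thesis
  proof (intro exI allI)
    fix y
    obtain z where "z \<in> {0..L}" "f y = f z" using periodic_reduce[OF assms(1,2)] by blast
    then show "f x \<le> f y" using x by simp
  qed
qed

lemma fermat_max:
  fixes f :: "real \<Rightarrow> real"
  assumes "\<forall>y. f y \<le> f x" "DERIV f x :> l" shows "l = 0"
  using DERIV_local_max[OF assms(2), of 1] assms(1) by auto

lemma fermat_min:
  fixes f :: "real \<Rightarrow> real"
  assumes "\<forall>y. f x \<le> f y" "DERIV f x :> l" shows "l = 0"
  using DERIV_local_min[OF assms(2), of 1] assms(1) by auto

lemma sq_between:
  fixes a t c lam K :: real
  assumes "a \<le> t" "t \<le> c" "(a - lam)^2 \<le> K" "(c - lam)^2 \<le> K"
  shows "(t - lam)^2 \<le> K"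
proof (cases "t \<ge> lam")
  case True
  then have "(t - lam)^2 \<le> (c - lam)^2" using assms by (intro power_mono) auto
  then show ?thesis using assms by linarith
next
  case False
  then have "(t - lam)^2 = (lam - t)^2" "(a - lam)^2 = (lam - a)^2" by (simp_all add: power2_commute)
  moreover have "(lam - t)^2 \<le> (lam - a)^2" using assms False by (intro power_mono) auto
  ultimately show ?thesis using assms by linarith
qed


lemma ftc_real:
  fixes f f' :: "real \<Rightarrow> real"
  assumes "a \<le> b" "\<And>x. DERIV f x :> f' x"
  shows "(f' has_integral (f b - f a)) {a..b}"
  by (rule fundamental_theorem_of_calculus[OF assms(1)])
     (simp add: has_real_derivative_iff_has_vector_derivative[symmetric] assms(2) has_field_derivative_at_within)

theorem mainTheorem16:
  fixes L \<alpha> lam \<mu> :: real and b :: "real \<Rightarrow> real"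
  assumes "L > 0" and "\<alpha> > 0"
    and "b \<in> Lambda L \<alpha>" and "lam > 0"
    and "is_principal_eigenvalue L lam b \<mu>"
  shows "- \<alpha> \<ge> \<mu> \<and> \<mu> \<ge> - \<alpha> - \<alpha>\<^sup>2 * L\<^sup>2"
proof -
  have L: "L > 0" by fact
  from assms(3) have bC1: "C1_fun b" and bnn: "\<And>x. b x \<ge> 0" and bper: "periodic_fun L b"
    and bint: "integral {0..L} b = \<alpha> * L" unfolding Lambda_def by auto
  from bC1 obtain b' where b': "\<And>x. DERIV b x :> b' x" unfolding C1_fun_def by blast
  have contb: "continuous_on UNIV b"
    by (rule continuous_at_imp_continuous_on) (metis DERIV_isCont b')
  have contb0: "\<And>a c. continuous_on {a..c} b" using contb continuous_on_subset by blast
  have bintg: "\<And>a c. b integrable_on {a..c}" using contb0 integrable_continuous_interval by blast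
  from assms(5) obtain p p' p'' where C2: "C2_with p p' p''" and ppos: "\<And>x. p x > 0"
    and pper: "periodic_fun L p"
    and eq: "\<And>x. - p'' x + 2 * lam * p' x - b x * p x = \<mu> * p x"
    unfolding is_principal_eigenvalue_def by blast
  from C2 have dp: "\<And>x. DERIV p x :> p' x" and dp': "\<And>x. DERIV p' x :> p'' x"
    unfolding C2_with_def by auto
  have p'per: "periodic_fun L p'" unfolding periodic_fun_def
  proof
    fix x
    have "DERIV (\<lambda>x. p (x + L)) x :> p' (x + L)"
    proof -
      have "DERIV (\<lambda>x. x + L) x :> 1" by (auto intro!: derivative_eq_intros)
      from DERIV_chain2[OF dp this] show ?thesis by simp
    qed
    moreover have "(\<lambda>x. p (x + L)) = p" using pper unfolding periodic_fun_def by auto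
    ultimately show "p' (x + L) = p' x" using dp DERIV_unique by metis
  qed
  define w where "w x = p' x / p x" for x
  have wper: "periodic_fun L w" using pper p'per unfolding periodic_fun_def w_def by simp
  have dw: "DERIV w x :> 2 * lam * w x - b x - \<mu> - (w x)^2" for x
  proof -
    have "DERIV w x :> (p'' x * p x - p' x * p' x) / (p x * p x)"
      unfolding w_def using DERIV_divide[OF dp' dp] ppos[of x] by auto
    moreover have "(p'' x * p x - p' x * p' x) / (p x * p x) = 2 * lam * w x - b x - \<mu> - (w x)^2"
    proof -
      have h: "p'' x = 2 * lam * p' x - b x * p x - \<mu> * p x" using eq[of x] by linarith
      have "p x \<noteq> 0" using ppos[of x] by simp
      then show ?thesis unfolding w_def h
        by (simp add: field_simps power2_eq_square)
    qed
    ultimately show ?thesis by simp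
  qed
  have contw: "continuous_on UNIV w"
    by (rule continuous_at_imp_continuous_on) (metis DERIV_isCont dw)
  have contw0: "\<And>a c. continuous_on {a..c} w" using contw continuous_on_subset by blast
  define I where "I = integral {0..L} (\<lambda>x. (w x)^2)"
  have I1: "((\<lambda>x. 2 * lam * w x - b x - \<mu> - (w x)^2) has_integral 0) {0..L}"
    using ftc_real[of 0 L w, OF _ dw] L wper unfolding periodic_fun_def
    by (metis add_0 less_eq_real_def diff_self)
  have dlog: "DERIV (\<lambda>x. ln (p x)) x :> w x" for x
    using DERIV_chain2[OF DERIV_ln_divide[OF ppos[of x]] dp[of x]] unfolding w_def by simp
  have I2: "(w has_integral 0) {0..L}"
    using ftc_real[of 0 L "\<lambda>x. ln (p x)" w, OF _ dlog] L pper unfolding periodic_fun_def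
    by (metis add_0 less_eq_real_def diff_self)
  have I3: "(b has_integral (\<alpha> * L)) {0..L}" using bintg bint by (metis has_integral_integral)
  have w2int: "(\<lambda>x. (w x)^2) integrable_on {0..L}"
    by (rule integrable_continuous_interval) (intro continuous_intros contw0)
  have I4: "((\<lambda>x. (w x)^2) has_integral I) {0..L}" using w2int unfolding I_def by blast
  have I5: "((\<lambda>x. \<mu>) has_integral (L * \<mu>)) {0..L}"
    using has_integral_const_real[of \<mu> 0 L] L by simp
  have "((\<lambda>x. 2 * lam * w x - b x - \<mu> - (w x)^2) has_integral (2 * lam * 0 - \<alpha> * L - L * \<mu> - I)) {0..L}"
    by (intro has_integral_diff has_integral_mult_right I2 I3 I4 I5)
  then have "0 = 2 * lam * 0 - \<alpha> * L - L * \<mu> - I" using I1 has_integral_unique by blast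
  then have muI: "\<mu> * L = - \<alpha> * L - I" by (simp add: algebra_simps)
  have Inn: "I \<ge> 0"
    using has_integral_le[OF has_integral_0 I4] by simp
  define K where "K = lam^2 - \<mu>"
  obtain xM where xM: "\<forall>y. w y \<le> w xM" using periodic_max[OF wper L contw] by blast
  obtain xm where xm: "\<forall>y. w xm \<le> w y" using periodic_min[OF wper L contw] by blast
  have "2 * lam * w xM - b xM - \<mu> - (w xM)^2 = 0" by (rule fermat_max[OF xM dw])
  then have hM: "(w xM - lam)^2 \<le> K" unfolding K_def using bnn[of xM]
    by (simp add: power2_eq_square algebra_simps)
  have "2 * lam * w xm - b xm - \<mu> - (w xm)^2 = 0" by (rule fermat_min[OF xm dw])
  then have hm: "(w xm - lam)^2 \<le> K" unfolding K_def using bnn[of xm]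
    by (simp add: power2_eq_square algebra_simps)
  have wK: "(w x - lam)^2 \<le> K" for x using sq_between[OF _ _ hm hM] xm xM by blast
  have dwge: "2 * lam * w x - b x - \<mu> - (w x)^2 \<ge> - b x" for x
    using wK[of x] unfolding K_def by (simp add: power2_eq_square algebra_simps)
  define B where "B t = integral {0..t} b" for t
  have dB: "DERIV B x :> b x" if "0 < x" "x < L" for x
  proof -
    have "(B has_vector_derivative b x) (at x within {0..L})"
      unfolding B_def using integral_has_vector_derivative[OF contb0, of x 0 L] that by auto
    moreover have "at x within {0..L} = at x"
      using that by (intro at_within_interior) auto
    ultimately show ?thesis by (simp add: has_real_derivative_iff_has_vector_derivative)
  qed
  have contB: "continuous_on {0..L} B"
    unfolding B_def by (rule indefinite_integral_continuous_1[OF bintg])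
  have mono: "w s + B s \<le> w t + B t" if "0 \<le> s" "s \<le> t" "t \<le> L" for s t
  proof (rule DERIV_nonneg_imp_increasing_open[OF that(2)])
    fix x assume "s < x" "x < t"
    then have "DERIV (\<lambda>x. w x + B x) x :> (2 * lam * w x - b x - \<mu> - (w x)^2) + b x"
      using that by (intro DERIV_add dw dB) auto
    then show "\<exists>y. DERIV (\<lambda>x. w x + B x) x :> y \<and> y \<ge> 0" using dwge[of x] by force
  next
    show "continuous_on {s..t} (\<lambda>x. w x + B x)"
      using that by (intro continuous_intros contw0 continuous_on_subset[OF contB]) auto
  qed
  have Bmono: "B s \<le> B t" if "s \<le> t" for s t
    unfolding B_def using that bnn by (intro integral_subset_le bintg) auto
  have B0: "B 0 = 0" unfolding B_def by simp
  have BL: "B L = \<alpha> * L" unfolding B_def using bint by simp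
  have contp: "continuous_on UNIV p"
    by (rule continuous_at_imp_continuous_on) (metis DERIV_isCont dp)
  obtain x0 where x0: "\<forall>y. p y \<le> p x0" using periodic_max[OF pper L contp] by blast
  have "p' x0 = 0" by (rule fermat_max[OF x0 dp])
  then have "w x0 = 0" unfolding w_def by simp
  then obtain z where z: "z \<in> {0..L}" "w z = 0" using periodic_reduce[OF wper L, of x0] by metis
  have w0L: "w 0 = w L" using wper unfolding periodic_fun_def by (metis add_0)
  have wb: "\<bar>w x\<bar> \<le> \<alpha> * L" if x: "x \<in> {0..L}" for x
  proof (cases "z \<le> x")
    case True
    have "w z + B z \<le> w x + B x" using mono[of z x] z x True by auto
    moreover have "w x + B x \<le> w L + B L" using mono[of x L] x by auto
    moreover have "w 0 + B 0 \<le> w z + B z" using mono[of 0 z] z by auto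
    moreover have "B z \<le> B x" "B x \<le> B L" "B 0 \<le> B z" using Bmono True x z by auto
    ultimately show ?thesis using z w0L B0 BL by linarith
  next
    case False
    have "w x + B x \<le> w z + B z" using mono[of x z] z x False by auto
    moreover have "w z + B z \<le> w L + B L" using mono[of z L] z by auto
    moreover have "w 0 + B 0 \<le> w x + B x" using mono[of 0 x] x by auto
    moreover have "B x \<le> B z" "B z \<le> B L" "B 0 \<le> B x" using Bmono False x z by auto
    ultimately show ?thesis using z w0L B0 BL by linarith
  qed
  have "(w x)^2 \<le> (\<alpha> * L)^2" if "x \<in> {0..L}" for x
    using power_mono[OF wb[OF that], of 2] by simp
  then have "I \<le> L * (\<alpha> * L)^2"
    using has_integral_le[OF I4 has_integral_const_real[of "(\<alpha> * L)^2" 0 L]] L by simp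
  then have "\<mu> * L \<ge> (- \<alpha> - \<alpha>\<^sup>2 * L\<^sup>2) * L" using muI
    by (simp add: algebra_simps power2_eq_square)
  then have lo: "\<mu> \<ge> - \<alpha> - \<alpha>\<^sup>2 * L\<^sup>2" using L by simp
  have "\<mu> * L \<le> (- \<alpha>) * L" using muI Inn by simp
  then have "\<mu> \<le> - \<alpha>" using L by (rule mult_right_le_imp_le)
  with lo show ?thesis by simp
qed

end
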